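(* Let $T$ be a $J$-unitary operator on ${\cal K}$. Then the geometric multiplicity of $1$ as an eigenvalue of $T$ equals the multiplicity of $1$ as an eigenvalue of $V(T)$, and the eigenvectors coincide: $\mathrm{Ker}(T-{\bf 1})=\mathrm{Ker}(V(T)-{\bf 1})$.
   Context: ${\cal H}$ is a separable complex Hilbert space, ${\cal K}={\cal H}\oplus{\cal H}$, $J=\begin{pmatrix}{\bf 1}&0\\0&-{\bf 1}\end{pmatrix}$. A bounded invertible $T$ on ${\cal K}$ is $J$-unitary if $T^*JT=J$; writing $T=\begin{pmatrix}a&b\\c&d\end{pmatrix}$ the blocks $a,d$ are invertible. $V(T)$ denotes the unitary $V(T)=\begin{pmatrix}(a^* )^{-1}&bd^{-1}\\-d^{-1}c&d^{-1}\end{pmatrix}=\begin{pmatrix}a-bd^{-1}c&bd^{-1}\\-d^{-1}c&d^{-1}\end{pmatrix}$. *)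

theory Defs
  imports "HOL-Analysis.Analysis"
begin

class complex_vector = real_vector +
  fixes scaleC :: "complex \<Rightarrow> 'a \<Rightarrow> 'a"  (infixr \<open>*\<^sub>C\<close> 75)
  assumes scaleC_add_right: "a *\<^sub>C (x + y) = a *\<^sub>C x + a *\<^sub>C y"
    and scaleC_add_left: "(a + b) *\<^sub>C x = a *\<^sub>C x + b *\<^sub>C x"
    and scaleC_scaleC: "a *\<^sub>C (b *\<^sub>C x) = (a * b) *\<^sub>C x"
    and scaleC_one: "1 *\<^sub>C x = x"
    and scaleR_scaleC: "scaleR r x = complex_of_real r *\<^sub>C x"

class chilbert_space = complex_vector + banach +
  fixes cinner :: "'a \<Rightarrow> 'a \<Rightarrow> complex"
  assumes cinner_conj: "cinner x y = cnj (cinner y x)"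
    and cinner_add_right: "cinner x (y + z) = cinner x y + cinner x z"
    and cinner_scaleC_right: "cinner x (a *\<^sub>C y) = a * cinner x y"
    and cinner_self_real: "Im (cinner x x) = 0"
    and cinner_self_nonneg: "0 \<le> Re (cinner x x)"
    and cinner_self_zero: "cinner x x = 0 \<longleftrightarrow> x = 0"
    and norm_cinner: "norm x = sqrt (Re (cinner x x))"

definition scaleK :: "complex \<Rightarrow> 'a::complex_vector \<times> 'a \<Rightarrow> 'a \<times> 'a" where
  "scaleK c u = (c *\<^sub>C fst u, c *\<^sub>C snd u)"

definition kinner :: "'a::chilbert_space \<times> 'a \<Rightarrow> 'a \<times> 'a \<Rightarrow> complex" where
  "kinner u v = cinner (fst u) (fst v) + cinner (snd u) (snd v)"

definition bounded_op :: "('a::chilbert_space \<times> 'a \<Rightarrow> 'a \<times> 'a) \<Rightarrow> bool" where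
  "bounded_op T \<longleftrightarrow> bounded_linear T \<and> (\<forall>c u. T (scaleK c u) = scaleK c (T u))"

definition is_adjoint :: "('a::chilbert_space \<times> 'a \<Rightarrow> 'a \<times> 'a) \<Rightarrow> ('a \<times> 'a \<Rightarrow> 'a \<times> 'a) \<Rightarrow> bool" where
  "is_adjoint T S \<longleftrightarrow> (\<forall>u v. kinner (T u) v = kinner u (S v))"

definition Jop :: "'a::ab_group_add \<times> 'a \<Rightarrow> 'a \<times> 'a" where
  "Jop u = (fst u, - snd u)"

definition J_unitary :: "('a::chilbert_space \<times> 'a \<Rightarrow> 'a \<times> 'a) \<Rightarrow> bool" where
  "J_unitary T \<longleftrightarrow> bounded_op T \<and> bij T \<and>
     (\<exists>S. is_adjoint T S \<and> (\<forall>u. S (Jop (T u)) = Jop u))"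

definition blk_a :: "('a::zero \<times> 'a \<Rightarrow> 'a \<times> 'a) \<Rightarrow> 'a \<Rightarrow> 'a" where
  "blk_a T x = fst (T (x, 0))"
definition blk_b :: "('a::zero \<times> 'a \<Rightarrow> 'a \<times> 'a) \<Rightarrow> 'a \<Rightarrow> 'a" where
  "blk_b T y = fst (T (0, y))"
definition blk_c :: "('a::zero \<times> 'a \<Rightarrow> 'a \<times> 'a) \<Rightarrow> 'a \<Rightarrow> 'a" where
  "blk_c T x = snd (T (x, 0))"
definition blk_d :: "('a::zero \<times> 'a \<Rightarrow> 'a \<times> 'a) \<Rightarrow> 'a \<Rightarrow> 'a" where
  "blk_d T y = snd (T (0, y))"

definition Vop :: "('a::ab_group_add \<times> 'a \<Rightarrow> 'a \<times> 'a) \<Rightarrow> 'a \<times> 'a \<Rightarrow> 'a \<times> 'a" where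
  "Vop T u = (let a = blk_a T; b = blk_b T; c = blk_c T; di = inv (blk_d T);
                  x = fst u; y = snd u
              in (a x - b (di (c x)) + b (di y), - di (c x) + di y))"

end

theory Submission
  imports Defs
begin

lemma cinner_zero_right[simp]: "cinner x (0::'a::chilbert_space) = 0"
  using cinner_add_right[of x 0 0] by simp
lemma cinner_zero_left[simp]: "cinner (0::'a::chilbert_space) x = 0"
  using cinner_conj[of 0 x] by simp
lemma cinner_minus_right[simp]: "cinner x (- y::'a::chilbert_space) = - cinner x y"
  using cinner_add_right[of x y "-y"] by (simp add: eq_neg_iff_add_eq_0 add.commute)
lemma cinner_diff_right: "cinner x (y - z::'a::chilbert_space) = cinner x y - cinner x z"
  using cinner_add_right[of x y "-z"] by simp
lemma cinner_add_left: "cinner (x + y) (z::'a::chilbert_space) = cinner x z + cinner y z"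
  by (metis cinner_add_right cinner_conj complex_cnj_add)
lemma cinner_minus_left[simp]: "cinner (- x) (y::'a::chilbert_space) = - cinner x y"
  by (metis cinner_minus_right cinner_conj complex_cnj_minus)
lemma cinner_diff_left: "cinner (x - y) (z::'a::chilbert_space) = cinner x z - cinner y z"
  using cinner_add_left[of x "-y" z] by simp
lemma cinner_scaleR_right: "cinner x (r *\<^sub>R y::'a::chilbert_space) = of_real r * cinner x y"
  by (simp add: scaleR_scaleC cinner_scaleC_right)
lemma cinner_scaleR_left: "cinner (r *\<^sub>R x) (y::'a::chilbert_space) = of_real r * cinner x y"
  by (metis cinner_scaleR_right cinner_conj complex_cnj_mult complex_cnj_complex_of_real)
lemma Re_cinner_sym: "Re (cinner x (y::'a::chilbert_space)) = Re (cinner y x)"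
  by (subst cinner_conj) simp
lemma norm_sq: "(norm (x::'a::chilbert_space))^2 = Re (cinner x x)"
  by (simp add: norm_cinner cinner_self_nonneg)
lemma cinner_self_of_real: "cinner x (x::'a::chilbert_space) = of_real ((norm x)^2)"
  by (simp add: norm_sq complex_eq_iff cinner_self_real)

lemma norm_diff_sq: "(norm (x - y::'a::chilbert_space))^2 = (norm x)^2 - 2 * Re (cinner x y) + (norm y)^2"
  by (simp add: norm_sq cinner_diff_left cinner_diff_right Re_cinner_sym[of y x])

lemma cs_aux: "2 * Re (cinner x (y::'a::chilbert_space)) \<le> (norm x)^2 + (norm y)^2"
  using norm_diff_sq[of x y] by (smt (verit) zero_le_power2)

lemma cauchy_schwarz: "Re (cinner x (y::'a::chilbert_space)) \<le> norm x * norm y"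
proof (cases "x = 0 \<or> y = 0")
  case True then show ?thesis by auto
next
  case False
  then have nx: "norm x > 0" and ny: "norm y > 0" by auto
  have "2 * Re (cinner ((1/norm x) *\<^sub>R x) ((1/norm y) *\<^sub>R y)) \<le> 1 + 1"
    using cs_aux[of "(1/norm x) *\<^sub>R x" "(1/norm y) *\<^sub>R y"] nx ny by simp
  then have "Re (cinner x y) / (norm x * norm y) \<le> 1"
    by (simp add: cinner_scaleR_left cinner_scaleR_right mult.commute)
  then show ?thesis using nx ny by (simp add: divide_le_eq)
qed


lemma blk_d_lin: "bounded_linear T \<Longrightarrow> bounded_linear (blk_d (T::'a::real_normed_vector \<times> 'a \<Rightarrow> 'a \<times> 'a))"
proof -
  assume T: "bounded_linear T"
  have "bounded_linear (\<lambda>y::'a. (0::'a, y))"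
    by (intro bounded_linear_Pair bounded_linear_zero bounded_linear_ident)
  then have "bounded_linear (\<lambda>y. T (0, y))" by (rule bounded_linear_compose[OF T])
  then have "bounded_linear (\<lambda>y. snd (T (0, y)))" by (rule bounded_linear_compose[OF bounded_linear_snd])
  then show ?thesis by (simp add: blk_d_def[abs_def])
qed

lemma blk_b_lin: "bounded_linear T \<Longrightarrow> bounded_linear (blk_b (T::'a::real_normed_vector \<times> 'a \<Rightarrow> 'a \<times> 'a))"
proof -
  assume T: "bounded_linear T"
  have "bounded_linear (\<lambda>y::'a. (0::'a, y))"
    by (intro bounded_linear_Pair bounded_linear_zero bounded_linear_ident)
  then have "bounded_linear (\<lambda>y. T (0, y))" by (rule bounded_linear_compose[OF T])
  then have "bounded_linear (\<lambda>y. fst (T (0, y)))" by (rule bounded_linear_compose[OF bounded_linear_fst])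
  then show ?thesis by (simp add: blk_b_def[abs_def])
qed

lemma adj_d:
  assumes "is_adjoint T S"
  shows "cinner (blk_d T y) z = cinner y (blk_d S (z::'a::chilbert_space))"
  using assms[unfolded is_adjoint_def, rule_format, of "(0,y)" "(0,z)"]
  by (simp add: kinner_def blk_d_def)

lemma kinner_Jop: "Re (kinner (p::'a::chilbert_space \<times> 'a) (Jop p)) = (norm (fst p))^2 - (norm (snd p))^2"
  by (simp add: kinner_def Jop_def norm_sq)
lemma kinner_Jop': "Re (kinner (Jop p) (p::'a::chilbert_space \<times> 'a)) = (norm (fst p))^2 - (norm (snd p))^2"
  by (simp add: kinner_def Jop_def norm_sq)

lemma d_below:
  assumes "is_adjoint T S" "\<forall>u. S (Jop (T u)) = Jop u"
  shows "(norm (y::'a::chilbert_space))^2 \<le> (norm (blk_d T y))^2"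
proof -
  have "kinner (T (0,y)) (Jop (T (0,y))) = kinner (0,y) (S (Jop (T (0,y))))"
    using assms(1) unfolding is_adjoint_def by blast
  also have "\<dots> = kinner (0,y) (Jop (0,y))" using assms(2) by simp
  finally have "Re (kinner (T (0,y)) (Jop (T (0,y)))) = Re (kinner (0,y) (Jop (0,y)))" by simp
  then have "(norm (blk_b T y))^2 - (norm (blk_d T y))^2 = 0 - (norm y)^2"
    unfolding kinner_Jop by (simp add: blk_b_def blk_d_def)
  then show ?thesis by (smt (verit) zero_le_power2)
qed

lemma TJS:
  assumes "bij T" "\<forall>u. S (Jop (T u)) = Jop u"
  shows "T (Jop (S v)) = Jop (v::'a::ab_group_add \<times> 'a)"
proof -
  define w where "w = inv T (Jop v)"
  have Tw: "T w = Jop v" using assms(1) by (simp add: w_def bij_is_surj surj_f_inv_f)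
  have "S (Jop (T w)) = Jop w" using assms(2) by blast
  then have "S v = Jop w" using Tw by (simp add: Jop_def)
  then have "Jop (S v) = w" by (simp add: Jop_def)
  then show ?thesis using Tw by simp
qed

lemma dS_below:
  assumes "is_adjoint T S" "bij T" "\<forall>u. S (Jop (T u)) = Jop u"
  shows "(norm (z::'a::chilbert_space))^2 \<le> (norm (blk_d S z))^2"
proof -
  define v where "v = ((0::'a), z)"
  have "kinner (T (Jop (S v))) v = kinner (Jop (S v)) (S v)"
    using assms(1) unfolding is_adjoint_def by blast
  then have "kinner (Jop v) v = kinner (Jop (S v)) (S v)" using TJS[OF assms(2,3)] by simp
  then have "Re (kinner (Jop v) v) = Re (kinner (Jop (S v)) (S v))" by simp
  then have "(norm (blk_b S z))^2 - (norm (blk_d S z))^2 = 0 - (norm z)^2"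
    unfolding kinner_Jop' by (simp add: blk_b_def blk_d_def v_def)
  then show ?thesis by (smt (verit) zero_le_power2)
qed

lemma dS_diff:
  assumes "is_adjoint T S" "bounded_linear T"
  shows "blk_d S (p - q) = blk_d S p - blk_d S (q::'a::chilbert_space)"
proof -
  interpret d: bounded_linear "blk_d T" using blk_d_lin[OF assms(2)] .
  define e where "e = blk_d S (p - q) - blk_d S p + blk_d S q"
  have "cinner y e = 0" for y
    unfolding e_def using adj_d[OF assms(1), symmetric]
    by (simp add: cinner_add_right cinner_diff_right)
  then have "e = 0" using cinner_self_zero[of e] by blast
  then show ?thesis unfolding e_def by (simp add: algebra_simps eq_neg_iff_add_eq_0)
qed


lemma d_surj:
  assumes adj: "is_adjoint T S" and bl: "bounded_linear T" and bj: "bij T"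
    and J: "\<forall>u. S (Jop (T u)) = Jop u"
  shows "surj (blk_d (T::'a::chilbert_space \<times> 'a \<Rightarrow> 'a \<times> 'a))"
proof -
  interpret d: bounded_linear "blk_d T" using blk_d_lin[OF bl] .
  obtain K0 where K0: "\<And>y. norm (blk_d T y) \<le> norm y * K0" using d.bounded by blast
  define K where "K = max K0 1"
  have K1: "K \<ge> 1" by (simp add: K_def)
  have Kb: "norm (blk_d T y) \<le> K * norm y" for y
    using K0[of y] by (smt (verit) K_def mult.commute mult_left_mono norm_ge_zero)
  have dSb: "norm (blk_d S z) \<le> K * norm z" for z
  proof -
    have "(norm (blk_d S z))^2 = Re (cinner (blk_d S z) (blk_d S z))" by (simp add: norm_sq)
    also have "\<dots> = Re (cinner (blk_d T (blk_d S z)) z)" by (simp add: adj_d[OF adj])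
    also have "\<dots> \<le> norm (blk_d T (blk_d S z)) * norm z" by (rule cauchy_schwarz)
    also have "\<dots> \<le> K * norm (blk_d S z) * norm z" by (simp add: Kb mult_right_mono)
    finally have h: "(norm (blk_d S z))^2 \<le> K * norm (blk_d S z) * norm z" .
    show ?thesis
    proof (cases "norm (blk_d S z) = 0")
      case True then show ?thesis using K1 by simp
    next
      case False
      then have "norm (blk_d S z) > 0" by simp
      with h show ?thesis by (simp add: power2_eq_square mult.assoc mult.left_commute)
    qed
  qed
  define P where "P w = blk_d T (blk_d S w)" for w
  have Pdiff: "P (x - y) = P x - P y" for x y
    by (simp add: P_def dS_diff[OF adj bl] d.diff)
  define M where "M = K^2"
  have M1: "M \<ge> 1" using K1 by (simp add: M_def one_le_power)
  define t where "t = 1 / M^2"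
  have t0: "t > 0" using M1 by (simp add: t_def)
  define c where "c = sqrt (1 - 1 / M^2)"
  have c0: "0 \<le> c" "c < 1" using M1 by (auto simp: c_def)
  have contr: "norm (w - t *\<^sub>R P w) \<le> c * norm w" for w
  proof -
    have re: "Re (cinner w (P w)) = (norm (blk_d S w))^2"
      by (simp add: P_def Re_cinner_sym[of w] adj_d[OF adj] norm_sq)
    have low: "(norm w)^2 \<le> Re (cinner w (P w))" using re dS_below[OF adj bj J] by simp
    have up: "norm (P w) \<le> M * norm w"
    proof -
      have "norm (P w) \<le> K * norm (blk_d S w)" by (simp add: P_def Kb)
      also have "\<dots> \<le> K * (K * norm w)" using dSb K1 by (simp add: mult_left_mono)
      finally show ?thesis by (simp add: M_def power2_eq_square mult.assoc)
    qed
    have up2: "(norm (P w))^2 \<le> M^2 * (norm w)^2"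
      using up by (metis norm_ge_zero power_mono power_mult_distrib)
    have "(norm (w - t *\<^sub>R P w))^2 = (norm w)^2 - 2 * t * Re (cinner w (P w)) + t^2 * (norm (P w))^2"
      by (simp add: norm_diff_sq cinner_scaleR_right power_mult_distrib t0 less_imp_le)
    also have "\<dots> \<le> (norm w)^2 - 2 * t * (norm w)^2 + t^2 * (M^2 * (norm w)^2)"
      using low up2 t0 by (smt (verit) mult_left_mono zero_le_power2 power2_eq_square)
    also have "\<dots> = (1 - 1/M^2) * (norm w)^2"
      using M1 by (simp add: t_def field_simps power2_eq_square)
    also have "\<dots> = (c * norm w)^2" using M1 by (simp add: c_def power_mult_distrib)
    finally show ?thesis
      using c0 by (meson mult_nonneg_nonneg norm_ge_zero power2_le_imp_le)
  qed
  show ?thesis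
  unfolding surj_def
  proof (intro allI)
    fix z
    define F where "F x = x + t *\<^sub>R (z - P x)" for x
    have "\<exists>!x. F x = x"
    proof (rule banach_fix_type[OF c0])
      show "\<forall>x y. dist (F x) (F y) \<le> c * dist x y"
      proof (intro allI)
        fix x y
        have "F x - F y = (x - y) - t *\<^sub>R P (x - y)"
          by (simp add: F_def Pdiff algebra_simps)
        then show "dist (F x) (F y) \<le> c * dist x y"
          using contr[of "x - y"] by (simp add: dist_norm)
      qed
    qed
    then obtain x where "F x = x" by blast
    then have "t *\<^sub>R (z - P x) = 0" by (simp add: F_def)
    then have "P x = z" using t0 by simp
    then show "\<exists>y. z = blk_d T y" by (auto simp: P_def)
  qed
qed


theorem theorem3p19:
  fixes T :: "'a::chilbert_space \<times> 'a \<Rightarrow> 'a \<times> 'a"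
  assumes "separable_space (euclidean :: 'a topology)"
    and "J_unitary T"
  shows "{u. T u - u = 0} = {u. Vop T u - u = 0}"
proof -
  from assms(2) obtain S where bl: "bounded_linear T" and bj: "bij T"
    and adj: "is_adjoint T S" and J: "\<forall>u. S (Jop (T u)) = Jop u"
    by (auto simp: J_unitary_def bounded_op_def)
  interpret T: bounded_linear T by (rule bl)
  interpret d: bounded_linear "blk_d T" using blk_d_lin[OF bl] .
  interpret b: bounded_linear "blk_b T" using blk_b_lin[OF bl] .
  have sj: "surj (blk_d T)" by (rule d_surj[OF adj bl bj J])
  have ij: "inj (blk_d T)"
  proof (rule injI)
    fix p q assume "blk_d T p = blk_d T q"
    then have "blk_d T (p - q) = 0" by (simp add: d.diff)
    then have "(norm (p - q))^2 \<le> 0" using d_below[OF adj J, of "p - q"] by simp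
    then show "p = q" by simp
  qed
  define di where "di = inv (blk_d T)"
  have ddi: "blk_d T (di p) = p" for p using sj by (simp add: di_def surj_f_inv_f)
  have did: "di (blk_d T p) = p" for p using ij by (simp add: di_def)
  have didiff: "di p - di q = di (p - q)" for p q
  proof -
    have "blk_d T (di p - di q) = blk_d T (di (p - q))" by (simp add: d.diff ddi)
    then show ?thesis using ij by (simp add: inj_eq)
  qed
  have Tform: "T (x, y) = (blk_a T x + blk_b T y, blk_c T x + blk_d T y)" for x y
  proof -
    have "T (x, y) = T ((x, 0) + (0, y))" by simp
    also have "\<dots> = T (x, 0) + T (0, y)" by (rule T.add)
    finally show ?thesis by (simp add: blk_a_def blk_b_def blk_c_def blk_d_def prod_eq_iff)
  qed
  have "T (x, y) = (x, y) \<longleftrightarrow> Vop T (x, y) = (x, y)" for x y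
  proof -
    have "T (x, y) = (x, y) \<longleftrightarrow> blk_a T x + blk_b T y = x \<and> blk_d T y = y - blk_c T x"
      by (auto simp: Tform algebra_simps)
    also have "\<dots> \<longleftrightarrow> blk_a T x + blk_b T y = x \<and> di (y - blk_c T x) = y"
      by (metis ddi did)
    also have "\<dots> \<longleftrightarrow> blk_a T x + blk_b T (di y - di (blk_c T x)) = x \<and> di y - di (blk_c T x) = y"
      by (auto simp: didiff)
    also have "\<dots> \<longleftrightarrow> Vop T (x, y) = (x, y)"
      by (auto simp: Vop_def Let_def di_def b.diff algebra_simps)
    finally show ?thesis .
  qed
  then show ?thesis by auto
qed

end
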